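(* Let $E$ be an entire function in $\overline{HB}$ and let $f\in\mathcal{H}^\infty(E)$ satisfy $\lVert f/E\rVert_\infty\le 1$. Then $f - \lambda E\in\overline{HB}$ for every complex number $\lambda$ with $\lvert\lambda\rvert\ge 1$.
   Context: $\overline{HB}$ denotes the class of entire functions $E$ satisfying $\lvert E(\overline z)\rvert\le\lvert E(z)\rvert$ for all $z$ in the upper half-plane $\mathbb{C}_+$. For an entire $g$, $g^{\#}(z)=\overline{g(\overline z)}$. $\mathcal{H}^\infty(E)$ is the set of entire $f$ such that $f/E$ and $f^{\#}/E$ are bounded analytic functions on $\mathbb{C}_+$, and $\lVert f/E\rVert_\infty=\sup_{x\in\mathbb{R}}\lvert f(x)/E(x)\rvert$. *)

theory Defs
  imports "HOL-Complex_Analysis.Complex_Analysis"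
begin

definition upper_half_plane :: "complex set" where
  "upper_half_plane = {z. Im z > 0}"

definition entire :: "(complex \<Rightarrow> complex) \<Rightarrow> bool" where
  "entire f \<longleftrightarrow> f holomorphic_on UNIV"

definition HBbar :: "(complex \<Rightarrow> complex) set" where
  "HBbar = {E. entire E \<and> (\<forall>z\<in>upper_half_plane. norm (E (cnj z)) \<le> norm (E z))}"

definition sharp :: "(complex \<Rightarrow> complex) \<Rightarrow> complex \<Rightarrow> complex" where
  "sharp g = (\<lambda>z. cnj (g (cnj z)))"

definition bounded_analytic_quotient ::
    "(complex \<Rightarrow> complex) \<Rightarrow> (complex \<Rightarrow> complex) \<Rightarrow> bool" where
  "bounded_analytic_quotient h E \<longleftrightarrow>
     (\<exists>g. g holomorphic_on upper_half_plane \<and> bounded (g ` upper_half_plane) \<and>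
          (\<forall>z\<in>upper_half_plane. h z = g z * E z))"

definition Hinf :: "(complex \<Rightarrow> complex) \<Rightarrow> (complex \<Rightarrow> complex) set" where
  "Hinf E = {f. entire f \<and> bounded_analytic_quotient f E \<and>
                bounded_analytic_quotient (sharp f) E}"

end

theory Submission
  imports Defs
begin

lemma PL_half_plane:
  fixes \<phi> :: "complex \<Rightarrow> complex" and M :: real
  assumes cont: "continuous_on {z. Im z \<ge> 0} \<phi>"
    and holo: "\<phi> holomorphic_on {z. Im z > 0}"
    and bnd: "\<And>z. Im z > 0 \<Longrightarrow> norm (\<phi> z) \<le> M"
    and re: "\<And>z. Im z = 0 \<Longrightarrow> norm (\<phi> z) \<le> 1"
    and z0: "Im z0 > 0"
  shows "norm (\<phi> z0) \<le> 1"
proof -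
  have main: "norm (\<phi> z0) \<le> 1 + \<epsilon> * norm z0" if eps: "\<epsilon> > 0" for \<epsilon> :: real
  proof -
    define d where "d = (\<lambda>z. 1 - \<i> * of_real \<epsilon> * z)"
    have dre: "Re (d z) = 1 + \<epsilon> * Im z" for z by (simp add: d_def)
    have dge1: "norm (d z) \<ge> 1 + \<epsilon> * Im z" for z
      using complex_Re_le_cmod[of "d z"] dre by simp
    have dge2: "norm (d z) \<ge> \<epsilon> * norm z - 1" for z
    proof -
      have "norm (\<i> * of_real \<epsilon> * z) \<le> norm (d z) + 1"
        using norm_triangle_ineq2[of "\<i> * of_real \<epsilon> * z" 1] norm_minus_commute[of "\<i> * of_real \<epsilon> * z" 1]
        by (simp add: d_def)
      moreover have "norm (\<i> * of_real \<epsilon> * z) = \<epsilon> * norm z"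
        using eps by (simp add: norm_mult)
      ultimately show ?thesis by simp
    qed
    have dnz: "d z \<noteq> 0" if "Im z \<ge> 0" for z
    proof -
      have "1 \<le> norm (d z)" using dge1[of z] that eps
        by (smt (verit) mult_nonneg_nonneg)
      thus ?thesis by auto
    qed
    define R where "R = norm z0 + 1 + (\<bar>M\<bar> + 1) / \<epsilon>"
    have eR: "\<epsilon> * R \<ge> \<bar>M\<bar> + 1"
      using eps by (simp add: R_def distrib_left field_simps)
    define S where "S = {z. Im z > 0} \<inter> ball 0 R"
    have openS: "open S" unfolding S_def
      by (intro open_Int open_halfspace_Im_gt open_ball)
    have clS: "closure S \<subseteq> {z. Im z \<ge> 0} \<inter> cball 0 R"
      unfolding S_def
      by (intro closure_minimal) (auto intro!: closed_Int closed_halfspace_Im_ge)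
    define \<psi> where "\<psi> = (\<lambda>z. \<phi> z / d z)"
    have dh: "d holomorphic_on UNIV" unfolding d_def by (intro holomorphic_intros)
    have "norm (\<psi> z0) \<le> 1"
    proof (rule maximum_modulus_frontier[where S=S and f=\<psi> and \<xi>=z0])
      show "\<psi> holomorphic_on interior S"
        unfolding interior_open[OF openS] \<psi>_def
        by (rule holomorphic_on_divide[OF holomorphic_on_subset[OF holo] holomorphic_on_subset[OF dh]])
           (auto simp: S_def intro!: dnz)
      show "continuous_on (closure S) \<psi>"
        unfolding \<psi>_def
        by (rule continuous_on_subset[OF _ clS])
           (auto intro!: continuous_on_divide continuous_on_subset[OF cont] dnz
              holomorphic_on_imp_continuous_on[OF holomorphic_on_subset[OF dh]])
      show "bounded S" unfolding S_def by auto
      have "0 < (\<bar>M\<bar> + 1) / \<epsilon>" using eps by simp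
      then have "norm z0 < R" unfolding R_def by linarith
      then show "z0 \<in> S" unfolding S_def using z0 by auto
    next
      fix z assume zf: "z \<in> frontier S"
      hence zc: "z \<in> closure S" and zn: "z \<notin> S"
        using frontier_def interior_open[OF openS] by auto
      hence im: "Im z \<ge> 0" and nz: "norm z \<le> R" using clS by auto
      show "norm (\<psi> z) \<le> 1"
      proof (cases "Im z = 0")
        case True
        have "norm (d z) \<ge> 1" using dge1[of z] True by simp
        moreover have "norm (\<phi> z) \<le> 1" using re True .
        ultimately show ?thesis unfolding \<psi>_def norm_divide
          by (simp add: divide_le_eq_1)
      next
        case False
        hence ip: "Im z > 0" using im by simp
        hence "norm z \<ge> R" using zn unfolding S_def by auto
        hence "norm (d z) \<ge> \<bar>M\<bar>" using dge2[of z] eR eps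
          by (smt (verit) mult_left_mono)
        moreover have "norm (d z) > 0" using dnz[of z] im by simp
        moreover have "norm (\<phi> z) \<le> M" using bnd ip .
        ultimately show ?thesis unfolding \<psi>_def norm_divide
          by (simp add: divide_le_eq_1)
      qed
    qed
    moreover have "norm (d z0) \<le> 1 + \<epsilon> * norm z0"
      using norm_triangle_ineq4[of 1 "\<i> * of_real \<epsilon> * z0"] eps by (simp add: d_def norm_mult)
    moreover have "norm (d z0) > 0" using dnz[of z0] z0 by simp
    ultimately show ?thesis unfolding \<psi>_def norm_divide
      by (simp add: divide_le_eq_1)
  qed
  show ?thesis
  proof (rule field_le_epsilon)
    fix e :: real assume e: "e > 0"
    have "norm (\<phi> z0) \<le> 1 + (e / (norm z0 + 1)) * norm z0"
    proof (rule main)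
      show "0 < e / (norm z0 + 1)" using e norm_ge_zero[of z0] by (intro divide_pos_pos) linarith+
    qed
    also have "\<dots> \<le> 1 + e"
    proof -
      have p: "0 < 1 + norm z0" using norm_ge_zero[of z0] by linarith
      show ?thesis using e p by (simp add: field_simps)
    qed
    finally show "norm (\<phi> z0) \<le> 1 + e" .
  qed
qed


lemma rs_point:
  fixes q :: "complex \<Rightarrow> complex"
  assumes mero: "q meromorphic_on {z}" and lp: "z islimpt S"
    and bS: "\<And>w. w \<in> S \<Longrightarrow> norm (q w) \<le> K"
  shows "remove_sings q analytic_on {z}" and "(q \<longlongrightarrow> remove_sings q z) (at z)"
proof -
  have iso: "isolated_singularity_at q z"
    using mero by (rule meromorphic_on_isolated_singularity)
  have ne: "not_essential q z"
    using mero by (rule meromorphic_on_not_essential)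
  have ntS: "\<not> trivial_limit (at z within S)"
    using lp trivial_limit_within by blast
  have "\<not> is_pole q z"
  proof
    assume "is_pole q z"
    hence "filterlim q at_infinity (at z)" by (simp add: is_pole_def)
    hence "filterlim q at_infinity (at z within S)"
      by (rule filterlim_mono) (auto simp: at_le)
    hence "eventually (\<lambda>w. \<bar>K\<bar> + 1 \<le> norm (q w)) (at z within S)"
      by (auto simp: filterlim_at_infinity[OF order_refl])
    moreover have "eventually (\<lambda>w. w \<in> S) (at z within S)"
      by (simp add: eventually_at_filter)
    ultimately have "eventually (\<lambda>w. False) (at z within S)"
    proof eventually_elim
      case (elim w)
      thus ?case using bS[of w] by linarith
    qed
    thus False using ntS by (simp add: trivial_limit_def)
  qed
  then obtain c where c: "(q \<longlongrightarrow> c) (at z)"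
    using ne unfolding not_essential_def by blast
  show "remove_sings q analytic_on {z}"
    using iso c by (rule remove_sings_analytic_at)
  show "(q \<longlongrightarrow> remove_sings q z) (at z)"
    using c remove_sings_eqI[OF c] by simp
qed

lemma rs_bound:
  fixes q :: "complex \<Rightarrow> complex"
  assumes lim: "(q \<longlongrightarrow> c) (at z)" and lp: "z islimpt T"
    and bT: "\<And>w. w \<in> T \<Longrightarrow> norm (q w) \<le> K"
  shows "norm c \<le> K"
proof (rule Lim_norm_ubound)
  show "\<not> trivial_limit (at z within T)" using lp trivial_limit_within by blast
  show "(q \<longlongrightarrow> c) (at z within T)"
    using lim by (rule tendsto_mono[OF at_le, rotated]) simp
  show "eventually (\<lambda>w. norm (q w) \<le> K) (at z within T)"
    using bT by (auto simp: eventually_at_filter)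
qed

lemma islimpt_H:
  assumes "Im z \<ge> 0"
  shows "z islimpt {w. Im w > 0}"
  unfolding islimpt_approachable
proof (intro allI impI)
  fix e :: real assume e: "e > 0"
  show "\<exists>x'\<in>{w. Im w > 0}. x' \<noteq> z \<and> dist x' z < e"
    by (rule bexI[of _ "z + \<i> * of_real (e/2)"]) (use e assms in \<open>auto simp: dist_norm norm_mult\<close>)
qed

lemma islimpt_R:
  assumes "Im z = 0"
  shows "z islimpt {w. Im w = 0}"
  unfolding islimpt_approachable
proof (intro allI impI)
  fix e :: real assume e: "e > 0"
  show "\<exists>x'\<in>{w. Im w = 0}. x' \<noteq> z \<and> dist x' z < e"
    by (rule bexI[of _ "z + of_real (e/2)"]) (use e assms in \<open>auto simp: dist_norm\<close>)
qed


lemma ratio_bound: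
  fixes A B :: "complex \<Rightarrow> complex" and C :: real
  assumes hA: "A holomorphic_on UNIV" and hB: "B holomorphic_on UNIV"
    and bC: "\<And>w. Im w > 0 \<Longrightarrow> norm (A w) \<le> C * norm (B w)"
    and re: "\<And>x. Im x = 0 \<Longrightarrow> norm (A x / B x) \<le> 1"
    and w: "Im w > 0"
  shows "norm (A w) \<le> norm (B w)"
proof -
  define q where "q = (\<lambda>z. A z / B z)"
  define \<rho> where "\<rho> = remove_sings q"
  have aA: "A analytic_on UNIV" using hA by (simp add: analytic_on_open)
  have aB: "B analytic_on UNIV" using hB by (simp add: analytic_on_open)
  have mero: "q meromorphic_on UNIV" unfolding q_def
    by (intro meromorphic_on_divide analytic_on_imp_meromorphic_on aA aB)
  have qH: "norm (q v) \<le> \<bar>C\<bar>" if "v \<in> {w. Im w > 0}" for v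
  proof (cases "B v = 0")
    case True thus ?thesis by (simp add: q_def)
  next
    case False
    have "norm (A v) \<le> C * norm (B v)" using bC that by simp
    also have "\<dots> \<le> \<bar>C\<bar> * norm (B v)" by (intro mult_right_mono) auto
    finally show ?thesis using False by (simp add: q_def norm_divide divide_le_eq)
  qed
  have qR: "norm (q v) \<le> 1" if "v \<in> {w. Im w = 0}" for v
    using re that by (simp add: q_def)
  have pt: "\<rho> analytic_on {z} \<and> (q \<longlongrightarrow> \<rho> z) (at z)" if "Im z \<ge> 0" for z
  proof -
    have m: "q meromorphic_on {z}" using meromorphic_on_subset[OF mero] by blast
    show ?thesis using rs_point[OF m islimpt_H[OF that] qH] unfolding \<rho>_def by blast
  qed
  have ana: "\<rho> analytic_on {z. Im z \<ge> 0}"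
    by (rule analytic_on_analytic_at[THEN iffD2]) (use pt in blast)
  have bndH: "norm (\<rho> z) \<le> \<bar>C\<bar>" if "Im z > 0" for z
  proof -
    have z0: "Im z \<ge> 0" using that by simp
    show ?thesis using rs_bound[OF conjunct2[OF pt[OF z0]] islimpt_H[OF z0] qH] by simp
  qed
  have bndR: "norm (\<rho> z) \<le> 1" if "Im z = 0" for z
  proof -
    have z0: "Im z \<ge> 0" using that by simp
    show ?thesis using rs_bound[OF conjunct2[OF pt[OF z0]] islimpt_R[OF that] qR] by simp
  qed
  have c: "continuous_on {z. 0 \<le> Im z} \<rho>"
    using ana by (rule analytic_imp_holomorphic[THEN holomorphic_on_imp_continuous_on])
  have h: "\<rho> holomorphic_on {z. 0 < Im z}"
    by (rule holomorphic_on_subset[OF analytic_imp_holomorphic[OF ana]]) auto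
  have "norm (\<rho> w) \<le> 1"
    by (rule PL_half_plane[OF c h bndH bndR w])
  show ?thesis
  proof (cases "B w = 0")
    case True
    thus ?thesis using bC[OF w] by simp
  next
    case False
    have "q analytic_on {w}" unfolding q_def
      using False by (intro analytic_on_divide analytic_on_subset[OF aA] analytic_on_subset[OF aB]) auto
    hence "\<rho> w = q w" by (simp add: \<rho>_def)
    with \<open>norm (\<rho> w) \<le> 1\<close> False show ?thesis
      by (simp add: q_def norm_divide divide_le_eq)
  qed
qed


lemma entire_cnj_cnj:
  assumes "f holomorphic_on UNIV"
  shows "(\<lambda>z. cnj (f (cnj z))) holomorphic_on UNIV"
proof -
  have "(cnj \<circ> f \<circ> cnj) field_differentiable (at z)" for z
  proof -
    have "f field_differentiable (at (cnj z))"
      using assms holomorphic_on_imp_differentiable_at by blast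
    then obtain F where "(f has_field_derivative F) (at (cnj z))"
      unfolding field_differentiable_def by blast
    from has_field_derivative_cnj_cnj[OF this] show ?thesis
      unfolding field_differentiable_def by blast
  qed
  hence "(cnj \<circ> f \<circ> cnj) holomorphic_on UNIV"
    by (simp add: holomorphic_on_def field_differentiable_at_within)
  thus ?thesis by (simp add: o_def)
qed

lemma stepB:
  fixes f E :: "complex \<Rightarrow> complex" and l :: complex
  assumes hf: "f holomorphic_on UNIV" and hE: "E holomorphic_on UNIV"
    and hb: "\<And>z. Im z > 0 \<Longrightarrow> norm (E (cnj z)) \<le> norm (E z)"
    and A1: "\<And>z. Im z > 0 \<Longrightarrow> norm (f z) \<le> norm (E z)"
    and A2: "\<And>z. Im z > 0 \<Longrightarrow> norm (f (cnj z)) \<le> norm (E z)"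
    and l: "norm l > 1"
    and w: "Im w > 0"
  shows "norm (f (cnj w) - l * E (cnj w)) \<le> norm (f w - l * E w)"
proof -
  define F where "F = (\<lambda>z. f z - l * E z)"
  define Fs where "Fs = (\<lambda>z. cnj (F (cnj z)))"
  have hF: "F holomorphic_on UNIV" unfolding F_def using hf hE by (intro holomorphic_intros)
  have hFs: "Fs holomorphic_on UNIV" unfolding Fs_def by (rule entire_cnj_cnj[OF hF])
  define C where "C = (1 + norm l) / (norm l - 1)"
  have bC: "norm (Fs v) \<le> C * norm (F v)" if v: "Im v > 0" for v
  proof -
    have "norm (Fs v) = norm (F (cnj v))" by (simp add: Fs_def)
    also have "\<dots> \<le> norm (f (cnj v)) + norm l * norm (E (cnj v))"
      unfolding F_def using norm_triangle_ineq4 by (metis norm_mult)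
    also have "\<dots> \<le> norm (E v) + norm l * norm (E v)"
      using A2[OF v] hb[OF v] by (intro add_mono mult_left_mono) auto
    finally have up: "norm (Fs v) \<le> (1 + norm l) * norm (E v)" by (simp add: algebra_simps)
    have "norm l * norm (E v) \<le> norm (F v) + norm (f v)"
      unfolding F_def using norm_triangle_ineq2[of "l * E v" "f v"] norm_minus_commute[of "l * E v" "f v"]
      by (simp add: norm_mult)
    hence lo: "(norm l - 1) * norm (E v) \<le> norm (F v)" using A1[OF v] by (simp add: algebra_simps)
    have "(1 + norm l) * norm (E v) = C * ((norm l - 1) * norm (E v))"
      using l by (simp add: C_def field_simps)
    also have "\<dots> \<le> C * norm (F v)"
      using lo l by (intro mult_left_mono) (auto simp: C_def)
    finally show ?thesis using up by linarith
  qed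
  have re: "norm (Fs x / F x) \<le> 1" if x: "Im x = 0" for x
  proof -
    have "cnj x = x" using x by (simp add: complex_eq_iff)
    hence "norm (Fs x) = norm (F x)" by (simp add: Fs_def)
    thus ?thesis by (cases "F x = 0") (simp_all add: norm_divide)
  qed
  have "norm (Fs w) \<le> norm (F w)"
    by (rule ratio_bound[OF hFs hF bC re w])
  moreover have "norm (Fs w) = norm (F (cnj w))" by (simp only: Fs_def complex_mod_cnj)
  ultimately show ?thesis by (simp add: F_def)
qed


theorem lemma1:
  fixes E f :: "complex \<Rightarrow> complex" and l :: complex
  assumes "E \<in> HBbar"
    and "f \<in> Hinf E"
    and "\<forall>x::real. norm (f (of_real x) / E (of_real x)) \<le> 1"
    and "norm l \<ge> 1"
  shows "(\<lambda>z. f z - l * E z) \<in> HBbar"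
proof -
  from assms(1) have hE: "E holomorphic_on UNIV"
    and hb: "\<And>z. Im z > 0 \<Longrightarrow> norm (E (cnj z)) \<le> norm (E z)"
    by (auto simp: HBbar_def entire_def upper_half_plane_def)
  from assms(2) have hf: "f holomorphic_on UNIV" and q1: "bounded_analytic_quotient f E"
    and q2: "bounded_analytic_quotient (sharp f) E"
    by (auto simp: Hinf_def entire_def)
  from q1 obtain g1 where g1b: "bounded (g1 ` upper_half_plane)"
    and g1e: "\<forall>z\<in>upper_half_plane. f z = g1 z * E z"
    unfolding bounded_analytic_quotient_def by blast
  from g1b obtain M1 where M1: "\<forall>z\<in>upper_half_plane. norm (g1 z) \<le> M1"
    by (auto simp: bounded_iff)
  from q2 obtain g2 where g2b: "bounded (g2 ` upper_half_plane)"
    and g2e: "\<forall>z\<in>upper_half_plane. sharp f z = g2 z * E z"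
    unfolding bounded_analytic_quotient_def by blast
  from g2b obtain M2 where M2: "\<forall>z\<in>upper_half_plane. norm (g2 z) \<le> M2"
    by (auto simp: bounded_iff)
  have A1: "norm (f z) \<le> norm (E z)" if z: "Im z > 0" for z
  proof (rule ratio_bound[OF hf hE _ _ z])
    fix v :: complex assume v: "Im v > 0"
    have "f v = g1 v * E v" using g1e v by (simp add: upper_half_plane_def)
    moreover have "norm (g1 v) \<le> M1" using M1 v by (simp add: upper_half_plane_def)
    ultimately show "norm (f v) \<le> M1 * norm (E v)"
      by (simp add: norm_mult mult_right_mono)
  next
    fix x :: complex assume x: "Im x = 0"
    hence "x = of_real (Re x)" by (simp add: complex_eq_iff)
    thus "norm (f x / E x) \<le> 1" using assms(3) by metis
  qed
  have hfs: "(\<lambda>z. cnj (f (cnj z))) holomorphic_on UNIV"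
    by (rule entire_cnj_cnj[OF hf])
  have A2: "norm (f (cnj z)) \<le> norm (E z)" if z: "Im z > 0" for z
  proof -
    have "norm (cnj (f (cnj z))) \<le> norm (E z)"
    proof (rule ratio_bound[OF hfs hE _ _ z])
      fix v :: complex assume v: "Im v > 0"
      have "cnj (f (cnj v)) = g2 v * E v" using g2e v by (simp add: upper_half_plane_def sharp_def)
      moreover have "norm (g2 v) \<le> M2" using M2 v by (simp add: upper_half_plane_def)
      ultimately show "norm (cnj (f (cnj v))) \<le> M2 * norm (E v)"
        by (simp add: norm_mult mult_right_mono)
    next
      fix x :: complex assume x: "Im x = 0"
      hence xr: "x = of_real (Re x)" by (simp add: complex_eq_iff)
      hence "cnj x = x" by (metis complex_cnj_complex_of_real)
      hence "norm (cnj (f (cnj x)) / E x) = norm (f x / E x)"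
        by (simp add: norm_divide)
      thus "norm (cnj (f (cnj x)) / E x) \<le> 1" using assms(3) xr by metis
    qed
    thus ?thesis by simp
  qed
  have hol: "(\<lambda>z. f z - l * E z) holomorphic_on UNIV"
    using hf hE by (intro holomorphic_intros) auto
  have ineq: "norm (f (cnj z) - l * E (cnj z)) \<le> norm (f z - l * E z)" if z: "Im z > 0" for z
  proof (rule field_le_epsilon)
    fix e :: real assume e: "e > 0"
    define K where "K = norm l * (norm (E z) + norm (E (cnj z))) + 1"
    have K: "K > 0" unfolding K_def by (simp add: add_nonneg_pos)
    define d where "d = e / K"
    have d: "d > 0" using e K by (simp add: d_def)
    define l' where "l' = complex_of_real (1 + d) * l"
    have "norm (complex_of_real (1 + d)) = 1 + d"
      using d by (simp only: norm_of_real)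
    hence nl': "norm l' = (1 + d) * norm l" unfolding l'_def norm_mult by simp
    have l'1: "norm l' > 1"
    proof -
      have "(1 + d) * norm l \<ge> 1 + d"
        using mult_left_mono[of 1 "norm l" "1 + d"] d assms(4) by simp
      thus ?thesis using nl' d by linarith
    qed
    have B: "norm (f (cnj z) - l' * E (cnj z)) \<le> norm (f z - l' * E z)"
      by (rule stepB[OF hf hE hb A1 A2 l'1 z])
    have dl: "l' - l = complex_of_real d * l" by (simp add: l'_def algebra_simps)
    have n1: "norm (f (cnj z) - l * E (cnj z)) \<le> norm (f (cnj z) - l' * E (cnj z)) + d * norm l * norm (E (cnj z))"
    proof -
      have "f (cnj z) - l * E (cnj z) = (f (cnj z) - l' * E (cnj z)) + (l' - l) * E (cnj z)"
        by (simp add: algebra_simps)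
      also have "norm \<dots> \<le> norm (f (cnj z) - l' * E (cnj z)) + norm ((l' - l) * E (cnj z))"
        by (rule norm_triangle_ineq)
      also have "norm ((l' - l) * E (cnj z)) = d * norm l * norm (E (cnj z))"
        using d by (simp add: dl norm_mult)
      finally show ?thesis .
    qed
    have n2: "norm (f z - l' * E z) \<le> norm (f z - l * E z) + d * norm l * norm (E z)"
    proof -
      have "f z - l' * E z = (f z - l * E z) - (l' - l) * E z"
        by (simp add: algebra_simps)
      also have "norm \<dots> \<le> norm (f z - l * E z) + norm ((l' - l) * E z)"
        by (rule norm_triangle_ineq4)
      also have "norm ((l' - l) * E z) = d * norm l * norm (E z)"
        using d by (simp add: dl norm_mult)
      finally show ?thesis .
    qed
    have "d * norm l * norm (E (cnj z)) + d * norm l * norm (E z) \<le> d * K"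
      using d by (simp add: K_def algebra_simps)
    also have "d * K = e" using K by (simp add: d_def)
    finally show "norm (f (cnj z) - l * E (cnj z)) \<le> norm (f z - l * E z) + e"
      using n1 n2 B by linarith
  qed
  show ?thesis
    unfolding HBbar_def entire_def upper_half_plane_def
    using hol ineq by auto
qed

end
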